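(* Let $k>0$, $N\in\mathbb{N}^+$, $h=\frac{1}{N+1}$, and let $\mathcal{A}_h$ be the $(N+1)\times(N+1)$ matrix defined below acting on $\mathbb{Y}_h=\mathbb{C}^{N+1}$ with the inner product $\langle\cdot,\cdot\rangle_{\mathbb{Y}_h}$ defined below. Then for every $Y_h=(y_1,\dots,y_{N+1})^\top\in\mathbb{Y}_h$, $$\mathrm{Re}\,\langle\mathcal{A}_hY_h,Y_h\rangle_{\mathbb{Y}_h}=-k|y_{N+1}|^2,$$ so $\mathcal{A}_h$ is dissipative on $\mathbb{Y}_h$ for every such $h\in(0,1)$.
   Context: Let $D_h$ be the $(N+1)\times(N+1)$ lower bidiagonal matrix $D_h=\frac12(\text{ones on the diagonal and on the first subdiagonal})$, i.e. $(D_hY)_j=\frac{y_{j-1}+y_j}{2}$ with the convention $y_0=0$; and let $M_h=\frac1h(\text{$-1$ on the diagonal, $1$ on the first superdiagonal})$, an $(N+1)\times(N+1)$ upper bidiagonal matrix. Both are invertible. Let $e_{N+1}=(0,\dots,0,1)^\top$. For $Y_h=(y_1,\dots,y_{N+1})^\top\in\mathbb{C}^{N+1}$ let $Z_h=(z_0,\dots,z_N)^\top$ (the "shadow element" of $Y_h$) be the unique solution of $D_h^\top Z_h=-M_h^\top Y_h+\tfrac{ik}{2}y_{N+1}e_{N+1}$, and define $$\mathcal{A}_hY_h=D_h^{-1}\Big[-iM_hZ_h-\tfrac{k}{h}y_{N+1}e_{N+1}\Big]=D_h^{-1}\Big[iM_h(D_h^\top)^{-1}\big(M_h^\top Y_h-\tfrac{ik}{2}y_{N+1}e_{N+1}\big)-\tfrac{k}{h}y_{N+1}e_{N+1}\Big].$$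 Equivalently, with $y_0:=0$, $z_{N+1}:=-iky_{N+1}$, $u_{j+\frac12}=\frac{u_j+u_{j+1}}2$, $\delta_xu_{j+\frac12}=\frac{u_{j+1}-u_j}{h}$, one has $z_{j+\frac12}=\delta_xy_{j+\frac12}$ for $0\le j\le N$, and $\widetilde Y_h=\mathcal{A}_hY_h$ is characterized by $\widetilde y_{j+\frac12}=-i\delta_xz_{j+\frac12}$ for $0\le j\le N$ (with $\widetilde y_0=0$). This is the order-reduction semi-discretization of $w_t=-iw_{xx}$, $w(0,t)=0$, $w_x(1,t)=-ikw(1,t)$. The inner product on $\mathbb{Y}_h=\mathbb{C}^{N+1}$ is $\langle Y_h,\widetilde Y_h\rangle_{\mathbb{Y}_h}=h\langle D_hY_h,D_h\widetilde Y_h\rangle$, where $\langle\cdot,\cdot\rangle$ is the standard inner product of $\mathbb{C}^{N+1}$. *)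

theory Defs
  imports "Jordan_Normal_Form.Matrix"
begin

(* Vectors/matrices of dimension N+1, 0-based indices: entry j of Y_h is y_{j+1},
   entry j of Z_h is z_j. *)

definition hstep :: "nat \<Rightarrow> real" where
  "hstep N = 1 / (real N + 1)"

definition Dh :: "nat \<Rightarrow> complex mat" where
  "Dh N = mat (N+1) (N+1) (\<lambda>(i,j). if i = j \<or> i = j + 1 then 1/2 else 0)"

definition Mh :: "nat \<Rightarrow> complex mat" where
  "Mh N = mat (N+1) (N+1) (\<lambda>(i,j). if i = j then - complex_of_real (1 / hstep N)
                                   else if j = i + 1 then complex_of_real (1 / hstep N) else 0)"

definition eN :: "nat \<Rightarrow> complex vec" where
  "eN N = vec (N+1) (\<lambda>i. if i = N then 1 else 0)"

definition shadow :: "real \<Rightarrow> nat \<Rightarrow> complex vec \<Rightarrow> complex vec" where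
  "shadow k N Y = (THE Z. Z \<in> carrier_vec (N+1) \<and>
      transpose_mat (Dh N) *\<^sub>v Z =
        - (transpose_mat (Mh N) *\<^sub>v Y)
        + ((\<i> * complex_of_real k / 2) * (Y $ N)) \<cdot>\<^sub>v eN N)"

(* A_h Y = D_h^{-1} [ -i M_h Z_h - (k/h) y_{N+1} e_{N+1} ], i.e. the unique X with D_h X = ... *)
definition Ah :: "real \<Rightarrow> nat \<Rightarrow> complex vec \<Rightarrow> complex vec" where
  "Ah k N Y = (THE X. X \<in> carrier_vec (N+1) \<and>
      Dh N *\<^sub>v X =
        (- \<i>) \<cdot>\<^sub>v (Mh N *\<^sub>v shadow k N Y)
        - (complex_of_real (k / hstep N) * (Y $ N)) \<cdot>\<^sub>v eN N)"

definition cinner :: "complex vec \<Rightarrow> complex vec \<Rightarrow> complex" where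
  "cinner u v = (\<Sum>j<dim_vec u. u $ j * cnj (v $ j))"

definition inner_Yh :: "nat \<Rightarrow> complex vec \<Rightarrow> complex vec \<Rightarrow> complex" where
  "inner_Yh N Y Y' = complex_of_real (hstep N) * cinner (Dh N *\<^sub>v Y) (Dh N *\<^sub>v Y')"

end

theory Submission
  imports Defs "Jordan_Normal_Form.Determinant"
begin

lemma sum_band:
  fixes f :: "nat \<Rightarrow> complex"
  assumes "i < n"
  shows "(\<Sum>k\<in>{0..<n}. (if k = i then a else if Suc k = i then b else 0) * f k)
       = a * f i + (if 0 < i then b * f (i - 1) else 0)"
proof -
  have fin: "finite {0..<n}" by simp
  have "(\<Sum>k\<in>{0..<n}. (if k = i then a else if Suc k = i then b else 0) * f k)
     = (\<Sum>k\<in>{i}. (if k = i then a else if Suc k = i then b else 0) * f k)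
       + (\<Sum>k\<in>{0..<n} - {i}. (if k = i then a else if Suc k = i then b else 0) * f k)"
    using assms by (subst sum.remove[OF fin, of i]) auto
  also have "(\<Sum>k\<in>{0..<n} - {i}. (if k = i then a else if Suc k = i then b else 0) * f k)
     = (\<Sum>k\<in>{0..<n} - {i}. (if k = i - 1 \<and> 0 < i then b * f k else 0))"
    by (rule sum.cong) auto
  also have "\<dots> = (if 0 < i then b * f (i - 1) else 0)"
    using assms by (auto simp: sum.delta' split: if_splits)
  finally show ?thesis by simp
qed

lemma band_mult_mat:
  fixes A X :: "complex mat"
  assumes A: "A \<in> carrier_mat n n" and X: "X \<in> carrier_mat n m" and i: "i < n" and j: "j < m"
    and band: "\<And>k. k < n \<Longrightarrow> A $$ (i,k) = (if k = i then a else if Suc k = i then b else 0)"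
  shows "(A * X) $$ (i,j) = a * X $$ (i,j) + (if 0 < i then b * X $$ (i - 1, j) else 0)"
proof -
  have "(A * X) $$ (i,j) = (\<Sum>k\<in>{0..<n}. A $$ (i,k) * X $$ (k,j))"
    using A X i j by (simp add: scalar_prod_def)
  also have "\<dots> = (\<Sum>k\<in>{0..<n}. (if k = i then a else if Suc k = i then b else 0) * X $$ (k,j))"
    by (rule sum.cong) (auto simp: band)
  also have "\<dots> = a * X $$ (i,j) + (if 0 < i then b * X $$ (i - 1, j) else 0)"
    by (rule sum_band[OF i])
  finally show ?thesis .
qed

lemma band_mult_vec:
  fixes A :: "complex mat" and v :: "complex vec"
  assumes A: "A \<in> carrier_mat n n" and v: "v \<in> carrier_vec n" and i: "i < n"
    and band: "\<And>k. k < n \<Longrightarrow> A $$ (i,k) = (if k = i then a else if Suc k = i then b else 0)"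
  shows "(A *\<^sub>v v) $ i = a * v $ i + (if 0 < i then b * v $ (i - 1) else 0)"
proof -
  have "(A *\<^sub>v v) $ i = (\<Sum>k\<in>{0..<n}. A $$ (i,k) * v $ k)"
    using A v i by (simp add: scalar_prod_def)
  also have "\<dots> = (\<Sum>k\<in>{0..<n}. (if k = i then a else if Suc k = i then b else 0) * v $ k)"
    by (rule sum.cong) (auto simp: band)
  also have "\<dots> = a * v $ i + (if 0 < i then b * v $ (i - 1) else 0)"
    by (rule sum_band[OF i])
  finally show ?thesis .
qed

definition cc :: "nat \<Rightarrow> complex" where "cc N = complex_of_real (1 / hstep N)"

lemma Dh_carrier: "Dh N \<in> carrier_mat (N+1) (N+1)" by (simp add: Dh_def)
lemma Mh_carrier: "Mh N \<in> carrier_mat (N+1) (N+1)" by (simp add: Mh_def)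
lemma MhT_carrier: "transpose_mat (Mh N) \<in> carrier_mat (N+1) (N+1)" by (simp add: Mh_def)
lemma DhT_carrier: "transpose_mat (Dh N) \<in> carrier_mat (N+1) (N+1)" by (simp add: Dh_def)

lemma Dh_band: "i < N+1 \<Longrightarrow> k < N+1 \<Longrightarrow> Dh N $$ (i,k) = (if k = i then 1/2 else if Suc k = i then 1/2 else 0)"
  by (auto simp: Dh_def)
lemma MhT_band: "i < N+1 \<Longrightarrow> k < N+1 \<Longrightarrow> transpose_mat (Mh N) $$ (i,k) = (if k = i then - cc N else if Suc k = i then cc N else 0)"
  by (auto simp: Mh_def cc_def)

lemma comm: "transpose_mat (Mh N) * Dh N = Dh N * transpose_mat (Mh N)"
proof (rule eq_matI)
  fix i j assume i: "i < dim_row (Dh N * transpose_mat (Mh N))" and j: "j < dim_col (Dh N * transpose_mat (Mh N))"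
  hence i: "i < N+1" and j: "j < N+1" by (auto simp: Dh_def Mh_def)
  show "(transpose_mat (Mh N) * Dh N) $$ (i, j) = (Dh N * transpose_mat (Mh N)) $$ (i, j)"
    using i j band_mult_mat[OF MhT_carrier Dh_carrier i j MhT_band[OF i]]
       band_mult_mat[OF Dh_carrier MhT_carrier i j Dh_band[OF i]]
    by (auto simp: Dh_def Mh_def cc_def)
qed (auto simp: Dh_def Mh_def)


lemma solve_THE:
  fixes A :: "complex mat"
  assumes A: "A \<in> carrier_mat n n" and d: "det A \<noteq> 0" and b: "b \<in> carrier_vec n"
  shows "(THE X. X \<in> carrier_vec n \<and> A *\<^sub>v X = b) \<in> carrier_vec n \<and>
         A *\<^sub>v (THE X. X \<in> carrier_vec n \<and> A *\<^sub>v X = b) = b"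
proof (rule theI')
  from det_non_zero_imp_unit[OF A d, of "()"]
  obtain B where BA: "B * A = 1\<^sub>m n" and AB: "A * B = 1\<^sub>m n" and B: "B \<in> carrier_mat n n"
    unfolding Units_def ring_mat_def by auto
  show "\<exists>!X. X \<in> carrier_vec n \<and> A *\<^sub>v X = b"
  proof
    show "B *\<^sub>v b \<in> carrier_vec n \<and> A *\<^sub>v (B *\<^sub>v b) = b"
      using A B b AB by (simp add: assoc_mult_mat_vec[symmetric])
  next
    fix X assume X: "X \<in> carrier_vec n \<and> A *\<^sub>v X = b"
    have "X = (B * A) *\<^sub>v X" using X BA by simp
    also have "\<dots> = B *\<^sub>v b" using X A B by simp
    finally show "X = B *\<^sub>v b" .
  qed
qed

lemma det_Dh: "det (Dh N) \<noteq> 0"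
proof -
  have "det (Dh N) = prod_list (diag_mat (Dh N))"
    by (rule det_lower_triangular[OF _ Dh_carrier]) (auto simp: Dh_def)
  also have "diag_mat (Dh N) = replicate (N+1) (1/2)"
    by (rule nth_equalityI) (simp_all add: diag_mat_def Dh_def del: upt_Suc replicate_Suc)
  also have "prod_list (replicate (N+1) (1/2::complex)) = (1/2)^(N+1)" by (rule prod_list_replicate)
  finally have e: "det (Dh N) = (1/2)^(N+1)" .
  have "(1/2::complex)^(N+1) \<noteq> 0" by (rule power_not_zero) simp
  thus ?thesis unfolding e .
qed

lemma det_DhT: "det (transpose_mat (Dh N)) \<noteq> 0"
  using det_Dh det_transpose[OF Dh_carrier] by simp


definition conjv :: "complex vec \<Rightarrow> complex vec" where "conjv v = map_vec cnj v"

lemma conjv_carrier[simp]: "v \<in> carrier_vec n \<Longrightarrow> conjv v \<in> carrier_vec n"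
  by (simp add: conjv_def)

lemma conj_Dh: assumes v: "v \<in> carrier_vec (N+1)"
  shows "conjv (Dh N *\<^sub>v v) = Dh N *\<^sub>v conjv v"
proof (rule eq_vecI)
  fix i assume "i < dim_vec (Dh N *\<^sub>v conjv v)"
  hence i: "i < N+1" by (simp add: Dh_def)
  show "conjv (Dh N *\<^sub>v v) $ i = (Dh N *\<^sub>v conjv v) $ i"
    using band_mult_vec[OF Dh_carrier v i Dh_band[OF i]]
      band_mult_vec[OF Dh_carrier conjv_carrier[OF v] i Dh_band[OF i]] i v
    by (auto simp: conjv_def Dh_def)
qed (simp add: conjv_def Dh_def)

lemma conj_MhT: assumes v: "v \<in> carrier_vec (N+1)"
  shows "conjv (transpose_mat (Mh N) *\<^sub>v v) = transpose_mat (Mh N) *\<^sub>v conjv v"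
proof (rule eq_vecI)
  fix i assume "i < dim_vec (transpose_mat (Mh N) *\<^sub>v conjv v)"
  hence i: "i < N+1" by (simp add: Mh_def)
  show "conjv (transpose_mat (Mh N) *\<^sub>v v) $ i = (transpose_mat (Mh N) *\<^sub>v conjv v) $ i"
    using band_mult_vec[OF MhT_carrier v i MhT_band[OF i]]
      band_mult_vec[OF MhT_carrier conjv_carrier[OF v] i MhT_band[OF i]] i v
    by (auto simp: conjv_def Mh_def cc_def)
qed (simp add: conjv_def Mh_def)

lemma cinner_conjv: "dim_vec u = dim_vec v \<Longrightarrow> cinner u v = u \<bullet> conjv v"
  by (simp add: cinner_def scalar_prod_def conjv_def atLeast0LessThan)

lemma eN_carrier: "eN N \<in> carrier_vec (N+1)" by (simp add: eN_def)

lemma scalar_eN: "w \<in> carrier_vec (N+1) \<Longrightarrow> w \<bullet> eN N = w $ N"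
  by (simp add: scalar_prod_def eN_def sum.delta' cong: if_cong)

lemma conj_self_real: "Im (conjv w \<bullet> w) = 0"
  by (simp add: scalar_prod_def conjv_def Im_sum)


theorem lemma2:
  fixes k :: real and N :: nat and Y :: "complex vec"
  assumes "k > 0" and "N \<ge> 1" and "Y \<in> carrier_vec (N+1)"
  shows "Re (inner_Yh N (Ah k N Y) Y) = - k * (cmod (Y $ N))\<^sup>2"
proof -
  note Yc = assms(3)
  define D where "D = Dh N"
  define M where "M = Mh N"
  define e where "e = eN N"
  define c where "c = cc N"
  define Z where "Z = shadow k N Y"
  define X where "X = Ah k N Y"
  define \<beta> where "\<beta> = (\<i> * complex_of_real k / 2) * (Y $ N)"
  define \<alpha> where "\<alpha> = complex_of_real (k / hstep N) * (Y $ N)"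
  have D: "D \<in> carrier_mat (N+1) (N+1)" unfolding D_def by (rule Dh_carrier)
  have M: "M \<in> carrier_mat (N+1) (N+1)" unfolding M_def by (rule Mh_carrier)
  have MT: "transpose_mat M \<in> carrier_mat (N+1) (N+1)" unfolding M_def by (rule MhT_carrier)
  have DT: "transpose_mat D \<in> carrier_mat (N+1) (N+1)" unfolding D_def by (rule DhT_carrier)
  have e: "e \<in> carrier_vec (N+1)" unfolding e_def by (rule eN_carrier)
  have b1: "- (transpose_mat M *\<^sub>v Y) + \<beta> \<cdot>\<^sub>v e \<in> carrier_vec (N+1)"
    using MT Yc e by auto
  from solve_THE[OF DhT_carrier det_DhT b1[unfolded M_def e_def]]
  have Z: "Z \<in> carrier_vec (N+1)" and DZ: "transpose_mat D *\<^sub>v Z = - (transpose_mat M *\<^sub>v Y) + \<beta> \<cdot>\<^sub>v e"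
    unfolding Z_def shadow_def D_def M_def e_def \<beta>_def by auto
  have b2: "(- \<i>) \<cdot>\<^sub>v (M *\<^sub>v Z) - \<alpha> \<cdot>\<^sub>v e \<in> carrier_vec (N+1)"
    using M Z e by auto
  from solve_THE[OF Dh_carrier det_Dh b2[unfolded M_def e_def Z_def]]
  have X: "X \<in> carrier_vec (N+1)" and DX: "D *\<^sub>v X = (- \<i>) \<cdot>\<^sub>v (M *\<^sub>v Z) - \<alpha> \<cdot>\<^sub>v e"
    unfolding X_def Ah_def D_def M_def e_def \<alpha>_def Z_def by auto
  define U where "U = D *\<^sub>v conjv Y"
  define W where "W = transpose_mat M *\<^sub>v Y"
  have U: "U \<in> carrier_vec (N+1)" unfolding U_def using D Yc by simp
  have W: "W \<in> carrier_vec (N+1)" unfolding W_def using MT Yc by simp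
  have MZ: "M *\<^sub>v Z \<in> carrier_vec (N+1)" using M Z by simp
  have conjW: "conjv W = transpose_mat M *\<^sub>v conjv Y"
    unfolding W_def M_def by (rule conj_MhT[OF Yc])
  have Wc: "conjv W \<in> carrier_vec (N+1)" using W by simp
  have "inner_Yh N X Y = complex_of_real (hstep N) * ((D *\<^sub>v X) \<bullet> U)"
    unfolding inner_Yh_def U_def D_def using X Yc Dh_carrier[of N]
    by (simp add: cinner_conjv conj_Dh[OF Yc])
  also have "(D *\<^sub>v X) \<bullet> U = (- \<i>) * ((M *\<^sub>v Z) \<bullet> U) - \<alpha> * (e \<bullet> U)"
    unfolding DX using MZ e U
    by (simp add: minus_scalar_prod_distrib[of _ "N+1"])
  also have "e \<bullet> U = U $ N" using comm_scalar_prod[OF e U] scalar_eN[OF U, folded e_def] by simp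
  also have "(M *\<^sub>v Z) \<bullet> U = (transpose_mat M *\<^sub>v U) \<bullet> Z"
    using transpose_vec_mult_scalar[OF M Z U] comm_scalar_prod[OF MZ U] by simp
  also have "transpose_mat M *\<^sub>v U = D *\<^sub>v conjv W"
  proof -
    have "transpose_mat M *\<^sub>v U = (transpose_mat M * D) *\<^sub>v conjv Y"
      unfolding U_def using MT D Yc by simp
    also have "\<dots> = (D * transpose_mat M) *\<^sub>v conjv Y" unfolding D_def M_def by (simp add: comm)
    also have "\<dots> = D *\<^sub>v conjv W" unfolding conjW using MT D Yc by simp
    finally show ?thesis .
  qed
  also have "(D *\<^sub>v conjv W) \<bullet> Z = conjv W \<bullet> (transpose_mat D *\<^sub>v Z)"
    using transpose_vec_mult_scalar[OF DT Z Wc] by simp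
  also have "\<dots> = - (conjv W \<bullet> W) + \<beta> * (conjv W $ N)"
    unfolding DZ W_def[symmetric] using Wc W e
    by (simp add: scalar_prod_add_distrib[of _ "N+1"] scalar_eN[OF Wc, folded e_def])
  finally have main: "inner_Yh N X Y = complex_of_real (hstep N) *
      ((- \<i>) * (- (conjv W \<bullet> W) + \<beta> * (conjv W $ N)) - \<alpha> * U $ N)" .
  have N1: "N < N+1" by simp
  have UN: "U $ N = (cnj (Y $ N) + cnj (Y $ (N - 1))) / 2"
    unfolding U_def D_def using band_mult_vec[OF Dh_carrier conjv_carrier[OF Yc] N1 Dh_band[OF N1]] assms(2) Yc
    by (simp add: conjv_def)
  have WN: "conjv W $ N = - c * cnj (Y $ N) + c * cnj (Y $ (N - 1))"
    unfolding conjW c_def M_def using band_mult_vec[OF MhT_carrier conjv_carrier[OF Yc] N1 MhT_band[OF N1]] assms(2) Yc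
    by (simp add: conjv_def)
  have S: "Im (conjv W \<bullet> W) = 0" by (rule conj_self_real)
  have hc: "hstep N * (real N + 1) = 1" by (simp add: hstep_def)
  show ?thesis
    unfolding X_def[symmetric] main UN WN
    using S hc cmod_power2[of "Y $ N", unfolded power2_eq_square]
    apply (simp add: c_def cc_def \<alpha>_def \<beta>_def hstep_def cmod_power2 power2_eq_square field_simps)
    done
qed

end
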